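(* Let $(X,\mathcal{B})$ be a partial STS$(v)$ with $v>5$ and $\mathcal{B}\neq\emptyset$. Consider the following procedure: (1) choose a block $\{b,c,e\}\in\mathcal{B}$, a point $a\notin\{b,c,e\}$, and a point $d\notin\{a,b,c,e\}$; (2) set $x_1=a$, $x_2=b$, $x_3=c$, $x_4=d$, $x_5=e$; (3) for $i=6,\dots,v-1$ in turn, let $x_i$ be any point of $X$ distinct from $x_1,\dots,x_{i-1}$ and distinct from $\mathrm{third}(x_{i-2},x_{i-1})$ (if the latter is defined); (4) let $x_v$ be the unique point distinct from $x_1,\dots,x_{v-1}$; (5) if $\{x_{v-2},x_{v-1},x_v\}\in\mathcal{B}$, interchange $x_1$ and $x_v$; (6) output $\pi=[x_1\,x_2\,\cdots\,x_v]$. Then for every possible sequence of choices, step (3) can always be carried out, and the output $\pi$ is a $3$-good sequencing for $(X,\mathcal{B})$.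
   Context: A partial Steiner triple system of order $v$, PSTS$(v)$, is a pair $(X,\mathcal{B})$ where $X$ is a set of $v$ points and $\mathcal{B}$ is a set of 3-subsets of $X$ (blocks) such that every pair of distinct points lies in at most one block. For distinct points $x,y$ lying in a common block, $\mathrm{third}(x,y)$ denotes the unique $z$ with $\{x,y,z\}\in\mathcal{B}$; if $x,y$ lie in no block, $\mathrm{third}(x,y)$ is undefined and imposes no restriction. A sequencing of $X$ is an ordering of all points of $X$, each exactly once; it is $3$-good if no three consecutive points form a block. *)

theory Defs
  imports Main
begin

definition psts :: "'a set \<Rightarrow> 'a set set \<Rightarrow> bool" where
  "psts X B \<longleftrightarrow> finite X \<and> (\<forall>b\<in>B. b \<subseteq> X \<and> card b = 3) \<and>
     (\<forall>x y b1 b2. x \<noteq> y \<and> b1 \<in> B \<and> b2 \<in> B \<and> x \<in> b1 \<and> y \<in> b1 \<and> x \<in> b2 \<and> y \<in> b2 \<longrightarrow> b1 = b2)"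

definition third_defined :: "'a set set \<Rightarrow> 'a \<Rightarrow> 'a \<Rightarrow> bool" where
  "third_defined B x y \<longleftrightarrow> x \<noteq> y \<and> (\<exists>b\<in>B. x \<in> b \<and> y \<in> b)"

definition third :: "'a set set \<Rightarrow> 'a \<Rightarrow> 'a \<Rightarrow> 'a" where
  "third B x y = (THE z. {x, y, z} \<in> B)"

definition avoids_third :: "'a set set \<Rightarrow> 'a \<Rightarrow> 'a \<Rightarrow> 'a \<Rightarrow> bool" where
  "avoids_third B p q y \<longleftrightarrow> (third_defined B p q \<longrightarrow> y \<noteq> third B p q)"

text \<open>A list [x_1,...,x_k] (0-indexed) that can arise from steps (1)-(3) of the procedure.\<close>
definition valid_prefix :: "'a set \<Rightarrow> 'a set set \<Rightarrow> 'a list \<Rightarrow> bool" where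
  "valid_prefix X B xs \<longleftrightarrow> distinct xs \<and> set xs \<subseteq> X \<and> 5 \<le> length xs \<and>
     {xs ! 1, xs ! 2, xs ! 4} \<in> B \<and>
     (\<forall>j. 5 \<le> j \<and> j < length xs \<longrightarrow> avoids_third B (xs ! (j - 2)) (xs ! (j - 1)) (xs ! j))"

definition final_output :: "'a set set \<Rightarrow> 'a list \<Rightarrow> 'a \<Rightarrow> 'a list" where
  "final_output B xs y = (let ys = xs @ [y]; v = length ys in
     if {ys ! (v - 3), ys ! (v - 2), ys ! (v - 1)} \<in> B
     then ys[0 := ys ! (v - 1), v - 1 := ys ! 0] else ys)"

definition three_good :: "'a set \<Rightarrow> 'a set set \<Rightarrow> 'a list \<Rightarrow> bool" where
  "three_good X B pi \<longleftrightarrow> distinct pi \<and> set pi = X \<and>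
     (\<forall>j. j + 2 < length pi \<longrightarrow> {pi ! j, pi ! (j + 1), pi ! (j + 2)} \<notin> B)"

end

theory Submission
  imports Defs
begin

lemma block_unique:
  assumes "psts X B" "b1 \<in> B" "b2 \<in> B" "p \<noteq> q" "p \<in> b1" "q \<in> b1" "p \<in> b2" "q \<in> b2"
  shows "b1 = b2"
proof -
  have "\<forall>x y b1 b2. x \<noteq> y \<and> b1 \<in> B \<and> b2 \<in> B \<and> x \<in> b1 \<and> y \<in> b1 \<and> x \<in> b2 \<and> y \<in> b2 \<longrightarrow> b1 = b2"
    using assms(1) unfolding psts_def by (elim conjE)
  then show ?thesis using assms(2-) by metis
qed

lemma block_card:
  assumes "psts X B" "{p,q,r} \<in> B"
  shows "p \<noteq> q \<and> q \<noteq> r \<and> p \<noteq> r"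
proof -
  have c: "card {p,q,r} = 3" using assms unfolding psts_def by blast
  have le: "\<And>a b::'a. card {a,b} \<le> 2" by (simp add: card_insert_if)
  show ?thesis
  proof (rule ccontr)
    assume "\<not> ?thesis"
    then have "\<exists>a b. {p,q,r} = {a,b}" by blast
    then obtain a b where "{p,q,r} = {a,b}" by blast
    then have "card {p,q,r} \<le> 2" using le by simp
    then show False using c by simp
  qed
qed
lemma third_eq:
  assumes "psts X B" "{p,q,r} \<in> B"
  shows "third_defined B p q \<and> third B p q = r"
proof
  have d: "p \<noteq> q \<and> q \<noteq> r \<and> p \<noteq> r" using block_card[OF assms] .
  show "third_defined B p q" unfolding third_defined_def using d assms(2) by auto
  show "third B p q = r" unfolding third_def
  proof (rule the_equality)
    show "{p,q,r} \<in> B" by fact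
    fix z assume z: "{p,q,z} \<in> B"
    have dz: "p \<noteq> q \<and> q \<noteq> z \<and> p \<noteq> z" using block_card[OF assms(1) z] .
    have "{p,q,z} = {p,q,r}" by (rule block_unique[OF assms(1) z assms(2)]) (use d in auto)
    then have "z \<in> {p,q,r}" by (metis insertI1 insertI2)
    then show "z = r" using dz by auto
  qed
qed

lemma not_block_avoid:
  assumes "psts X B" "avoids_third B p q r"
  shows "{p,q,r} \<notin> B"
proof
  assume "{p,q,r} \<in> B"
  from third_eq[OF assms(1) this] assms(2) show False unfolding avoids_third_def by simp
qed

lemma prefix_triples:
  assumes P: "psts X B" and V: "valid_prefix X B xs" and j: "j + 2 < length xs"
  shows "{xs!j, xs!(j+1), xs!(j+2)} \<notin> B"
proof (cases "5 \<le> j + 2")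
  case True
  have A: "\<forall>j. 5 \<le> j \<and> j < length xs \<longrightarrow> avoids_third B (xs ! (j - 2)) (xs ! (j - 1)) (xs ! j)"
    using V unfolding valid_prefix_def by (elim conjE)
  have "avoids_third B (xs ! (j+2 - 2)) (xs ! (j+2 - 1)) (xs ! (j+2))"
    using A[rule_format, of "j+2"] True j by simp
  then have "avoids_third B (xs ! j) (xs ! (j+1)) (xs ! (j+2))"
    by (simp add: numeral_eq_Suc)
  then show ?thesis by (rule not_block_avoid[OF P])
next
  case False
  have L: "5 \<le> length xs" and D: "distinct xs" and E: "{xs ! 1, xs ! 2, xs ! 4} \<in> B"
    using V unfolding valid_prefix_def by auto
  have dist: "\<And>i k. i < length xs \<Longrightarrow> k < length xs \<Longrightarrow> i \<noteq> k \<Longrightarrow> xs!i \<noteq> xs!k"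
    using D nth_eq_iff_index_eq by blast
  have d01: "xs!0 \<noteq> xs!1" by (rule dist) (use L in linarith)+
  have d02: "xs!0 \<noteq> xs!2" by (rule dist) (use L in linarith)+
  have d04: "xs!0 \<noteq> xs!4" by (rule dist) (use L in linarith)+
  have d12: "xs!1 \<noteq> xs!2" by (rule dist) (use L in linarith)+
  have d31: "xs!3 \<noteq> xs!1" by (rule dist) (use L in linarith)+
  have d32: "xs!3 \<noteq> xs!2" by (rule dist) (use L in linarith)+
  have d34: "xs!3 \<noteq> xs!4" by (rule dist) (use L in linarith)+
  have d24: "xs!2 \<noteq> xs!4" by (rule dist) (use L in linarith)+
  have "j = 0 \<or> j = 1 \<or> j = 2" using False by auto
  then show ?thesis
  proof (elim disjE)
    assume j0: "j = 0"
    show ?thesis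
    proof
      assume T: "{xs!j, xs!(j+1), xs!(j+2)} \<in> B"
      then have T': "{xs!0, xs!1, xs!2} \<in> B" using j0 by (simp add: numeral_eq_Suc)
      have eq: "{xs!0, xs!1, xs!2} = {xs ! 1, xs ! 2, xs ! 4}"
        by (rule block_unique[OF P T' E d12]) simp_all
      have "xs!0 \<in> {xs ! 1, xs ! 2, xs ! 4}" by (subst eq[symmetric]) simp
      then have "xs!0 = xs!1 \<or> xs!0 = xs!2 \<or> xs!0 = xs!4" by simp
      then show False using d01 d02 d04 by blast
    qed
  next
    assume j1: "j = 1"
    show ?thesis
    proof
      assume T: "{xs!j, xs!(j+1), xs!(j+2)} \<in> B"
      then have T': "{xs!1, xs!2, xs!3} \<in> B" using j1 by (simp add: numeral_eq_Suc)
      have eq: "{xs!1, xs!2, xs!3} = {xs ! 1, xs ! 2, xs ! 4}"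
        by (rule block_unique[OF P T' E d12]) simp_all
      have "xs!3 \<in> {xs ! 1, xs ! 2, xs ! 4}" by (subst eq[symmetric]) simp
      then have "xs!3 = xs!1 \<or> xs!3 = xs!2 \<or> xs!3 = xs!4" by simp
      then show False using d31 d32 d34 by blast
    qed
  next
    assume j2: "j = 2"
    show ?thesis
    proof
      assume T: "{xs!j, xs!(j+1), xs!(j+2)} \<in> B"
      then have T': "{xs!2, xs!3, xs!4} \<in> B" using j2 by (simp add: numeral_eq_Suc)
      have eq: "{xs!2, xs!3, xs!4} = {xs ! 1, xs ! 2, xs ! 4}"
        by (rule block_unique[OF P T' E d24]) simp_all
      have "xs!3 \<in> {xs ! 1, xs ! 2, xs ! 4}" by (subst eq[symmetric]) simp
      then have "xs!3 = xs!1 \<or> xs!3 = xs!2 \<or> xs!3 = xs!4" by simp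
      then show False using d31 d32 d34 by blast
    qed
  qed
qed

lemma psts_fin: "psts X B \<Longrightarrow> finite X" unfolding psts_def by (elim conjE)

lemma part1:
  assumes P: "psts X B" and H: "valid_prefix X B xs" "length xs < card X - 1"
  shows "\<exists>y\<in>X. y \<notin> set xs \<and> avoids_third B p q y"
proof -
  have fin: "finite X" using psts_fin[OF P] .
  have D: "distinct xs" and S: "set xs \<subseteq> X" using H(1) unfolding valid_prefix_def by auto
  have cs: "card (set xs) = length xs" using D by (rule distinct_card)
  have "card (X - set xs) = card X - card (set xs)" using S by (simp add: card_Diff_subset)
  then have cA: "card (X - set xs) \<ge> 2" using H(2) cs by linarith
  have "X - set xs - {third B p q} \<noteq> {}"
  proof
    assume "X - set xs - {third B p q} = {}"
    then have "X - set xs \<subseteq> {third B p q}" by blast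
    then have "card (X - set xs) \<le> card {third B p q}" by (rule card_mono[rotated]) simp
    then show False using cA by simp
  qed
  then obtain y where "y \<in> X - set xs - {third B p q}" by blast
  then show ?thesis unfolding avoids_third_def by blast
qed

lemma part2:
  assumes P: "psts X B" and V: "valid_prefix X B xs" and Hl: "length xs = card X - 1"
    and yX: "y \<in> X" and yn: "y \<notin> set xs" and v5: "card X > 5"
  shows "three_good X B (final_output B xs y)"
proof -
  have fin: "finite X" using psts_fin[OF P] .
  have D: "distinct xs" and S: "set xs \<subseteq> X" and L5: "5 \<le> length xs"
    using V unfolding valid_prefix_def by auto
  define n where "n = length xs"
  define ys where "ys = xs @ [y]"
  have n5: "5 \<le> n" using L5 n_def by simp
  have Ly: "length ys = n + 1" unfolding ys_def n_def by simp
  have nv: "n + 1 = card X" using Hl v5 unfolding n_def by linarith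
  have ysx: "\<And>k. k < n \<Longrightarrow> ys ! k = xs ! k" unfolding ys_def n_def by (simp add: nth_append)
  have ysn: "ys ! n = y" unfolding ys_def n_def by simp
  have Dy: "distinct ys" unfolding ys_def using D yn by simp
  have Sy: "set ys = X"
  proof (rule card_subset_eq[OF fin])
    show "set ys \<subseteq> X" unfolding ys_def using S yX by simp
    show "card (set ys) = card X" using distinct_card[OF Dy] Ly nv by simp
  qed
  have trip: "\<And>j. j + 2 < n \<Longrightarrow> {ys!j, ys!(j+1), ys!(j+2)} \<notin> B"
  proof -
    fix j assume j: "j + 2 < n"
    have "{xs!j, xs!(j+1), xs!(j+2)} \<notin> B" using prefix_triples[OF P V] j n_def by simp
    moreover have "ys!j = xs!j" "ys!(j+1) = xs!(j+1)" "ys!(j+2) = xs!(j+2)" using ysx j by simp_all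
    ultimately show "{ys!j, ys!(j+1), ys!(j+2)} \<notin> B" by simp
  qed
  have idx: "length ys - 3 = n - 2" "length ys - 2 = n - 1" "length ys - 1 = n"
    using Ly by auto
  have distx: "\<And>i k. i < n \<Longrightarrow> k < n \<Longrightarrow> i \<noteq> k \<Longrightarrow> xs!i \<noteq> xs!k"
    using D nth_eq_iff_index_eq n_def by blast
  have d12: "xs!1 \<noteq> xs!2" by (rule distx) (use n5 in linarith)+
  have E: "{xs ! 1, xs ! 2, xs ! 4} \<in> B" using V unfolding valid_prefix_def by simp
  have fo0: "final_output B xs y = (if {ys ! (n - 2), ys ! (n - 1), ys ! n} \<in> B
     then ys[0 := ys ! n, n := ys ! 0] else ys)"
    unfolding final_output_def Let_def ys_def[symmetric] idx ..
  show "three_good X B (final_output B xs y)"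
  proof (cases "{ys ! (n - 2), ys ! (n - 1), ys ! n} \<in> B")
    case False
    have fo: "final_output B xs y = ys" using fo0 False by simp
    show ?thesis unfolding fo three_good_def
    proof (intro conjI allI impI)
      show "distinct ys" by fact
      show "set ys = X" by fact
      fix j assume j: "j + 2 < length ys"
      show "{ys ! j, ys ! (j + 1), ys ! (j + 2)} \<notin> B"
      proof (cases "j + 2 < n")
        case True then show ?thesis using trip by simp
      next
        case c: False
        then have "j = n - 2" "j + 1 = n - 1" "j + 2 = n" using j Ly n5 by linarith+
        then show ?thesis using False by simp
      qed
    qed
  next
    case True
    define zs where "zs = ys[0 := ys ! n, n := ys ! 0]"
    have fo: "final_output B xs y = zs" using fo0 True zs_def by simp
    have n0: "0 < n" using n5 by simp
    have Lz: "length zs = n + 1" unfolding zs_def using Ly by simp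
    have z0: "zs ! 0 = y" unfolding zs_def using n0 Ly ysn by (simp add: nth_list_update)
    have zn: "zs ! n = xs ! 0" unfolding zs_def using n0 Ly ysx by (simp add: nth_list_update)
    have zk: "\<And>k. 0 < k \<Longrightarrow> k < n \<Longrightarrow> zs ! k = ys ! k"
      unfolding zs_def using Ly by (simp add: nth_list_update)
    show ?thesis unfolding fo three_good_def
    proof (intro conjI allI impI)
      show "distinct zs" unfolding zs_def using Dy Ly by simp
      show "set zs = X" unfolding zs_def using Sy Ly by simp
      fix j assume j: "j + 2 < length zs"
      show "{zs ! j, zs ! (j + 1), zs ! (j + 2)} \<notin> B"
      proof (cases "j = 0")
        case j0: True
        have e1: "zs ! 1 = xs ! 1" using zk[of 1] ysx[of 1] n5 by simp
        have e2: "zs ! 2 = xs ! 2" using zk[of 2] ysx[of 2] n5 by simp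
        show ?thesis
        proof
          assume T: "{zs ! j, zs ! (j + 1), zs ! (j + 2)} \<in> B"
          have T': "{y, xs!1, xs!2} \<in> B" using T j0 e1 e2 z0 by (simp add: numeral_eq_Suc)
          have eq: "{y, xs!1, xs!2} = {xs ! 1, xs ! 2, xs ! 4}"
            by (rule block_unique[OF P T' E d12]) simp_all
          have "y \<in> {xs ! 1, xs ! 2, xs ! 4}" by (subst eq[symmetric]) simp
          then have "y \<in> set xs" using L5 by auto
          then show False using yn by simp
        qed
      next
        case jn0: False
        show ?thesis
        proof (cases "j + 2 < n")
          case True
          have "zs!j = ys!j" "zs!(j+1) = ys!(j+1)" "zs!(j+2) = ys!(j+2)"
            using zk jn0 True by simp_all
          then show ?thesis using trip[OF True] by simp
        next
          case c2: False
          then have jj: "j = n - 2" "j + 1 = n - 1" "j + 2 = n" using j Lz n5 by linarith+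
          have e: "zs ! (n-2) = ys ! (n-2)" "zs ! (n-1) = ys ! (n-1)" using zk n5 by simp_all
          have y2: "ys!(n-2) = xs!(n-2)" "ys!(n-1) = xs!(n-1)" using ysx n0 by simp_all
          have ne: "xs ! (n-2) \<noteq> xs ! (n-1)" by (rule distx) (use n5 in linarith)+
          have ne0: "xs!0 \<noteq> xs!(n-2)" "xs!0 \<noteq> xs!(n-1)" by (rule distx; use n5 in linarith)+
          have y0: "xs!0 \<noteq> y" using yn n5 n_def by (metis nth_mem order_less_le_trans zero_less_numeral)
          have TB: "{xs ! (n-2), xs ! (n-1), y} \<in> B" using True y2 ysn by simp
          show ?thesis
          proof
            assume T: "{zs ! j, zs ! (j + 1), zs ! (j + 2)} \<in> B"
            have T': "{xs ! (n-2), xs ! (n-1), xs!0} \<in> B" using T jj e y2 zn by simp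
            have eq: "{xs ! (n-2), xs ! (n-1), xs!0} = {xs ! (n-2), xs ! (n-1), y}"
              by (rule block_unique[OF P T' TB ne]) simp_all
            have "xs!0 \<in> {xs ! (n-2), xs ! (n-1), y}" by (subst eq[symmetric]) simp
            then have "xs!0 = xs!(n-2) \<or> xs!0 = xs!(n-1) \<or> xs!0 = y" by simp
            then show False using ne0 y0 by blast
          qed
        qed
      qed
    qed
  qed
qed

theorem mainTheorem4:
  fixes X :: "'a set" and B :: "'a set set"
  assumes "psts X B" and "card X > 5" and "B \<noteq> {}"
  shows "(\<forall>xs. valid_prefix X B xs \<and> length xs < card X - 1 \<longrightarrow>
            (\<exists>y\<in>X. y \<notin> set xs \<and> avoids_third B (xs ! (length xs - 2)) (xs ! (length xs - 1)) y))
       \<and> (\<forall>xs y. valid_prefix X B xs \<and> length xs = card X - 1 \<and> y \<in> X \<and> y \<notin> set xs \<longrightarrow>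
            three_good X B (final_output B xs y))"
  using part1[OF assms(1)] part2[OF assms(1) _ _ _ _ assms(2)] by blast

end
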